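(* Let $n, C \in \mathbb{Z}_{+}$, let $\bm{x}_i \in \mathbb{R}^n$, and let $\bm{v}_1, \dots, \bm{v}_C \in \mathbb{R}^n$ be such that $\|\bm{x}_i - \bm{v}_j\|_2 > 0$ for all $j \in \{1,\dots,C\}$. For a fuzzy factor $r \in (1, +\infty)$ define the fuzzy membership degrees $$u_{ij} = u_{ij}(r) = \frac{1}{\sum_{k=1}^{C}\left(\frac{\|\bm{x}_i-\bm{v}_j\|_2^2}{\|\bm{x}_i-\bm{v}_k\|_2^2}\right)^{\frac{1}{r-1}}}, \qquad j = 1,\dots,C.$$ Then $$\lim_{r\rightarrow 1^{+}}\left(\sum_{j=1}^C (u_{ij})^r\,\|\bm{x}_i-\bm{v}_j\|_2^2\right) = \min_{j\in\{1,\dots,C\}}\|\bm{x}_i-\bm{v}_j\|_2^2 .$$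
   Context: This concerns fuzzy clustering, which solves $\min_{\mathbf{U},\mathbf{V}}\sum_{j=1}^C\sum_{i=1}^M (u_{ij})^r\|\bm{x}_i-\bm{v}_j\|_2^2$ subject to $\sum_{j=1}^C u_{ij}=1$, $u_{ij}\in[0,1]$, over data points $\bm{x}_1,\dots,\bm{x}_M\in\mathbb{R}^n$, clustering centroids $\mathbf{V}=\{\bm{v}_j\}_{j=1}^C$ and membership matrix $\mathbf{U}=[u_{ij}]$; for fixed centroids, the optimal memberships are given by the closed-form expression in the claim. The claim concerns the contribution of a single data point $\bm{x}_i$ to the objective at these optimal memberships. *)

theory Defs
  imports "HOL-Analysis.Analysis"
begin

definition fuzzy_membership ::
  "nat \<Rightarrow> (nat \<Rightarrow> real ^ 'n) \<Rightarrow> real ^ 'n \<Rightarrow> real \<Rightarrow> nat \<Rightarrow> real" where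
  "fuzzy_membership C v x r j =
     1 / (\<Sum>k = 1..C. ((norm (x - v j))\<^sup>2 / (norm (x - v k))\<^sup>2) powr (1 / (r - 1)))"

end

theory Submission imports Defs "HOL-Real_Asymp.Real_Asymp" begin
lemma s_top: "filterlim (\<lambda>r::real. 1/(r-1)) at_top (at_right 1)"
  by real_asymp

lemma pw_lt1:
  assumes "0 < c" "c < (1::real)"
  shows "((\<lambda>r. c powr (1/(r-1))) \<longlongrightarrow> 0) (at_right 1)"
proof -
  have l: "ln c < 0" using assms by simp
  have "filterlim (\<lambda>r. ln c * (1/(r-1))) at_bot (at_right 1)"
    by (rule filterlim_tendsto_neg_mult_at_bot[OF tendsto_const l s_top])
  then have "((\<lambda>r. exp (ln c * (1/(r-1)))) \<longlongrightarrow> 0) (at_right 1)"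
    by (rule filterlim_compose[OF exp_at_bot])
  then show ?thesis using assms by (simp add: powr_def mult.commute)
qed

lemma pw_gt1:
  assumes "c > (1::real)"
  shows "filterlim (\<lambda>r. c powr (1/(r-1))) at_top (at_right 1)"
proof -
  have l: "ln c > 0" using assms by simp
  have "filterlim (\<lambda>r. ln c * (1/(r-1))) at_top (at_right 1)"
    by (rule filterlim_tendsto_pos_mult_at_top[OF tendsto_const l s_top])
  then have "filterlim (\<lambda>r. exp (ln c * (1/(r-1)))) at_top (at_right 1)"
    by (rule filterlim_compose[OF exp_at_top])
  then show ?thesis using assms by (simp add: powr_def mult.commute)
qed

theorem proposition1:
  fixes C :: nat and x :: "real ^ 'n" and v :: "nat \<Rightarrow> real ^ 'n"
  assumes "C \<ge> 1"
    and "\<And>j. j \<in> {1..C} \<Longrightarrow> norm (x - v j) > 0"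
  shows "((\<lambda>r. \<Sum>j = 1..C. (fuzzy_membership C v x r j) powr r * (norm (x - v j))\<^sup>2)
           \<longlongrightarrow> (MIN j\<in>{1..C}. (norm (x - v j))\<^sup>2)) (at_right 1)"
proof -
  define d where "d j = (norm (x - v j))\<^sup>2" for j
  define m where "m = (MIN j\<in>{1..C}. d j)"
  define A where "A = {j\<in>{1..C}. d j = m}"
  define u where "u r j = fuzzy_membership C v x r j" for r j
  have dpos: "d j > 0" if "j \<in> {1..C}" for j
    using assms(2)[OF that] by (simp add: d_def)
  have ne: "{1..C} \<noteq> {}" using assms(1) by simp
  have "m \<in> d ` {1..C}" unfolding m_def using ne by (intro Min_in) auto
  then obtain j0 where j0: "j0 \<in> {1..C}" "d j0 = m" by auto
  have mle: "m \<le> d j" if "j \<in> {1..C}" for j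
    unfolding m_def using that by (intro Min_le) auto
  have finA: "finite A" and A_sub: "A \<subseteq> {1..C}" unfolding A_def by auto
  have j0A: "j0 \<in> A" using j0 unfolding A_def by auto
  have cardA: "card A > 0" using finA j0A card_gt_0_iff by blast
  have u_eq: "u r j = 1 / (\<Sum>k\<in>{1..C}. (d j / d k) powr (1/(r-1)))" for r j
    unfolding u_def fuzzy_membership_def d_def by simp
  have unonneg: "u r j \<ge> 0" for r j
    unfolding u_eq by (intro divide_nonneg_nonneg sum_nonneg) auto
  have L: "((\<lambda>r. u r j) \<longlongrightarrow> (if j \<in> A then 1 / card A else 0)) (at_right 1)"
    if j: "j \<in> {1..C}" for j
  proof (cases "j \<in> A")
    case True
    then have dj: "d j = m" unfolding A_def by auto
    have "((\<lambda>r. (d j / d k) powr (1/(r-1))) \<longlongrightarrow> (if k \<in> A then 1 else 0)) (at_right 1)"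
      if k: "k \<in> {1..C}" for k
    proof (cases "k \<in> A")
      case True
      then have "d k = m" unfolding A_def by auto
      then have "d j / d k = 1" using dj dpos[OF k] by simp
      then show ?thesis using True by simp
    next
      case False
      then have "m < d k" using mle[OF k] k unfolding A_def by auto
      then have "d j / d k < 1" "0 < d j / d k" using dj dpos[OF k] dpos[OF j] by auto
      then show ?thesis using False pw_lt1 by simp
    qed
    then have "((\<lambda>r. \<Sum>k\<in>{1..C}. (d j / d k) powr (1/(r-1))) \<longlongrightarrow>
        (\<Sum>k\<in>{1..C}. if k \<in> A then 1 else 0)) (at_right 1)"
      by (intro tendsto_sum) auto
    moreover have "(\<Sum>k\<in>{1..C}. if k \<in> A then 1 else (0::real)) = card A"
      using A_sub by (simp add: sum.If_cases Int_absorb1)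
    ultimately have "((\<lambda>r. \<Sum>k\<in>{1..C}. (d j / d k) powr (1/(r-1))) \<longlongrightarrow> real (card A)) (at_right 1)"
      by simp
    then have "((\<lambda>r. 1 / (\<Sum>k\<in>{1..C}. (d j / d k) powr (1/(r-1)))) \<longlongrightarrow> 1 / real (card A)) (at_right 1)"
      using cardA by (intro tendsto_divide tendsto_const) auto
    then show ?thesis using True unfolding u_eq by simp
  next
    case False
    then have "m < d j" using mle[OF j] j unfolding A_def by auto
    then have gt: "d j / d j0 > 1" using j0 dpos[OF j0(1)] by simp
    have F1: "filterlim (\<lambda>r. (d j / d j0) powr (1/(r-1))) at_top (at_right 1)"
      by (rule pw_gt1[OF gt])
    have F2: "(d j / d j0) powr (1/(r-1)) \<le> (\<Sum>k\<in>{1..C}. (d j / d k) powr (1/(r-1)))" for r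
      by (rule member_le_sum[OF j0(1)]) auto
    have "filterlim (\<lambda>r. \<Sum>k\<in>{1..C}. (d j / d k) powr (1/(r-1))) at_top (at_right 1)"
      by (rule filterlim_at_top_mono[OF F1]) (use F2 in auto)
    then have "((\<lambda>r. inverse (\<Sum>k\<in>{1..C}. (d j / d k) powr (1/(r-1)))) \<longlongrightarrow> 0) (at_right 1)"
      by (rule tendsto_inverse_0_at_top)
    then show ?thesis using False unfolding u_eq by (simp add: inverse_eq_divide)
  qed
  have P: "((\<lambda>r. u r j powr r * d j) \<longlongrightarrow> (if j \<in> A then 1 / card A else 0) * d j) (at_right 1)"
    if j: "j \<in> {1..C}" for j
  proof (intro tendsto_mult tendsto_const)
    show "((\<lambda>r. u r j powr r) \<longlongrightarrow> (if j \<in> A then 1 / card A else 0)) (at_right 1)"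
    proof (cases "j \<in> A")
      case True
      have "((\<lambda>r. u r j powr r) \<longlongrightarrow> (1 / card A) powr 1) (at_right 1)"
        using L[OF j] True cardA by (intro tendsto_powr tendsto_ident_at) auto
      then show ?thesis using True by simp
    next
      case False
      have "((\<lambda>r. u r j powr r) \<longlongrightarrow> 0) (at_right 1)"
        using L[OF j] False unonneg by (intro tendsto_zero_powrI[where b=1] tendsto_ident_at) auto
      then show ?thesis using False by simp
    qed
  qed
  have "((\<lambda>r. \<Sum>j\<in>{1..C}. u r j powr r * d j) \<longlongrightarrow>
      (\<Sum>j\<in>{1..C}. (if j \<in> A then 1 / card A else 0) * d j)) (at_right 1)"
    using P by (intro tendsto_sum) auto
  moreover have "(\<Sum>j\<in>{1..C}. (if j \<in> A then 1 / card A else 0) * d j) = m"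
  proof -
    have "(\<Sum>j\<in>{1..C}. (if j \<in> A then 1 / card A else 0) * d j)
        = (\<Sum>j\<in>{1..C}. if j \<in> A then 1 / card A * m else 0)"
      by (rule sum.cong) (auto simp: A_def)
    also have "\<dots> = (\<Sum>j\<in>{1..C} \<inter> A. 1 / card A * m)"
      by (rule sum.inter_restrict[symmetric]) simp
    also have "\<dots> = (\<Sum>j\<in>A. 1 / card A * m)" using A_sub by (simp add: Int_absorb1)
    also have "\<dots> = m" using cardA by simp
    finally show ?thesis .
  qed
  moreover have "(\<lambda>r. \<Sum>j = 1..C. (fuzzy_membership C v x r j) powr r * (norm (x - v j))\<^sup>2)
      = (\<lambda>r. \<Sum>j\<in>{1..C}. u r j powr r * d j)" by (simp add: u_def d_def)
  moreover have "(MIN j\<in>{1..C}. (norm (x - v j))\<^sup>2) = m" by (simp add: m_def d_def)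
  ultimately show ?thesis by simp
qed

end
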